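(* Let $q$ be a power of a prime $p$, let $k$ be an algebraically closed field of characteristic $p$, $G=\mathrm{GL}_n(k)$, $\mathfrak{g}=\mathfrak{gl}_n(k)$. Let $F:G\to G$ be $F((g_{i,j}))=\big((g^q_{n+1-j,\,n+1-i})\big)^{-1}$ and $F:\mathfrak{g}\to\mathfrak{g}$ be $F((x_{i,j}))=(x^q_{n+1-j,\,n+1-i})$. Fix $\alpha\in\mathbb{F}_{q^2}\setminus\mathbb{F}_q$ and define $s^{-1}:\mathfrak{g}_{\mathrm{nil}}\to G_{\mathrm{uni}}$ by $s^{-1}(x)=(1+\alpha^q x)^{-1}(\alpha x+1)$. If $x\in\mathfrak{g}_{\mathrm{nil}}$ satisfies $F(x)=x$, then $s^{-1}(x)\in G^F=\{g\in G: F(g)=g\}$.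
   Context: $G_{\mathrm{uni}}$ is the set of unipotent elements of $G$ and $\mathfrak{g}_{\mathrm{nil}}$ the set of nilpotent elements of $\mathfrak{g}$; $G^F$ is the finite unitary group $\mathrm{GU}_n(\mathbb{F}_q)$ defined by this $F$. *)

theory Defs
  imports "Jordan_Normal_Form.Matrix" "HOL-Computational_Algebra.Polynomial"
begin

definition alg_closed_type :: "'k::field itself \<Rightarrow> bool" where
  "alg_closed_type _ \<longleftrightarrow> (\<forall>f :: 'k poly. degree f > 0 \<longrightarrow> (\<exists>z. poly f z = 0))"

text \<open>Matrices are n x n JNF matrices, indices 0..n-1; so index n+1-i (1-based) becomes n-1-i.\<close>

definition GL :: "nat \<Rightarrow> 'k::field mat set" where
  "GL n = {g \<in> carrier_mat n n. invertible_mat g}"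

definition minv :: "nat \<Rightarrow> 'k::field mat \<Rightarrow> 'k mat" where
  "minv n A = (THE B. B \<in> carrier_mat n n \<and> A * B = 1\<^sub>m n \<and> B * A = 1\<^sub>m n)"

definition nilp :: "nat \<Rightarrow> 'k::field mat set" where
  "nilp n = {x \<in> carrier_mat n n. \<exists>m. x ^\<^sub>m m = 0\<^sub>m n n}"

definition unip :: "nat \<Rightarrow> 'k::field mat set" where
  "unip n = {g \<in> GL n. g - 1\<^sub>m n \<in> nilp n}"

definition F_lie :: "nat \<Rightarrow> nat \<Rightarrow> 'k::field mat \<Rightarrow> 'k mat" where
  "F_lie q n x = mat n n (\<lambda>(i,j). (x $$ (n - 1 - j, n - 1 - i)) ^ q)"

definition F_grp :: "nat \<Rightarrow> nat \<Rightarrow> 'k::field mat \<Rightarrow> 'k mat" where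
  "F_grp q n g = minv n (mat n n (\<lambda>(i,j). (g $$ (n - 1 - j, n - 1 - i)) ^ q))"

definition GF :: "nat \<Rightarrow> nat \<Rightarrow> 'k::field mat set" where
  "GF q n = {g \<in> GL n. F_grp q n g = g}"

definition s_inv :: "nat \<Rightarrow> nat \<Rightarrow> 'k::field \<Rightarrow> 'k mat \<Rightarrow> 'k mat" where
  "s_inv q n \<alpha> x = minv n (1\<^sub>m n + (\<alpha> ^ q) \<cdot>\<^sub>m x) * (\<alpha> \<cdot>\<^sub>m x + 1\<^sub>m n)"

end

theory Submission imports Defs "HOL-Computational_Algebra.Primes"
begin

lemma minv_unique:
  fixes A B :: "'k::field mat"
  assumes A: "A \<in> carrier_mat n n" and B: "B \<in> carrier_mat n n"
    and AB: "A * B = 1\<^sub>m n" and BA: "B * A = 1\<^sub>m n"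
  shows "minv n A = B"
  unfolding minv_def
proof (rule the_equality)
  show "B \<in> carrier_mat n n \<and> A * B = 1\<^sub>m n \<and> B * A = 1\<^sub>m n" using assms by auto
next
  fix C assume C: "C \<in> carrier_mat n n \<and> A * C = 1\<^sub>m n \<and> C * A = 1\<^sub>m n"
  have "C = C * (A * B)" using C AB by (auto simp: right_mult_one_mat)
  also have "\<dots> = (C * A) * B" using A B C by (metis assoc_mult_mat)
  also have "\<dots> = B" using C B by (auto simp: left_mult_one_mat)
  finally show "C = B" .
qed

definition Tm :: "nat \<Rightarrow> nat \<Rightarrow> 'k::field mat \<Rightarrow> 'k mat" where
  "Tm q n x = mat n n (\<lambda>(i,j). (x $$ (n - 1 - j, n - 1 - i)) ^ q)"

lemma Tm_carrier[simp]: "Tm q n x \<in> carrier_mat n n" unfolding Tm_def by auto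

lemma Tm_mult:
  fixes A B :: "'k::field mat"
  assumes A: "A \<in> carrier_mat n n" and B: "B \<in> carrier_mat n n"
    and fr: "\<And>(f :: nat \<Rightarrow> 'k) S. sum f S ^ q = sum (\<lambda>i. f i ^ q) S"
  shows "Tm q n (A * B) = Tm q n B * Tm q n A"
proof (rule eq_matI)
  fix i j assume i: "i < dim_row (Tm q n B * Tm q n A)" and j: "j < dim_col (Tm q n B * Tm q n A)"
  hence i: "i < n" and j: "j < n" by (auto simp: Tm_def)
  have "Tm q n (A * B) $$ (i, j) = (\<Sum>k<n. A $$ (n-1-j, k) * B $$ (k, n-1-i)) ^ q"
    using A B i j by (simp add: Tm_def scalar_prod_def lessThan_atLeast0)
  also have "\<dots> = (\<Sum>k<n. (A $$ (n-1-j, k))^q * (B $$ (k, n-1-i))^q)"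
    by (simp add: fr power_mult_distrib)
  also have "\<dots> = (\<Sum>l<n. (B $$ (n-1-l, n-1-i))^q * (A $$ (n-1-j, n-1-l))^q)"
    by (rule sum.reindex_bij_witness[where i="\<lambda>l. n-1-l" and j="\<lambda>k. n-1-k"]) (auto simp: mult.commute)
  also have "\<dots> = (Tm q n B * Tm q n A) $$ (i, j)"
    using A B i j by (simp add: Tm_def scalar_prod_def lessThan_atLeast0)
  finally show "Tm q n (A * B) $$ (i, j) = (Tm q n B * Tm q n A) $$ (i, j)" .
qed (auto simp: Tm_def)

lemma Tm_add:
  fixes A B :: "'k::field mat"
  assumes A: "A \<in> carrier_mat n n" and B: "B \<in> carrier_mat n n"
    and fr: "\<And>u v :: 'k. (u + v) ^ q = u ^ q + v ^ q"
  shows "Tm q n (A + B) = Tm q n A + Tm q n B"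
  using A B by (intro eq_matI) (auto simp: Tm_def fr)

lemma Tm_smult:
  fixes A :: "'k::field mat"
  assumes A: "A \<in> carrier_mat n n"
  shows "Tm q n (c \<cdot>\<^sub>m A) = (c ^ q) \<cdot>\<^sub>m Tm q n A"
  using A by (intro eq_matI) (auto simp: Tm_def power_mult_distrib)

lemma Tm_one:
  assumes "q > 0"
  shows "Tm q n (1\<^sub>m n :: 'k::field mat) = 1\<^sub>m n"
  using assms by (intro eq_matI) (auto simp: Tm_def)


lemma comm_lin:
  fixes X x :: "'k::field mat"
  assumes X: "X \<in> carrier_mat n n" and x: "x \<in> carrier_mat n n" and cx: "x * X = X * x"
  shows "(1\<^sub>m n + c \<cdot>\<^sub>m x) * X = X * (1\<^sub>m n + c \<cdot>\<^sub>m x)"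
  using X x cx
  by (simp add: add_mult_distrib_mat[of _ n n _ _ n] mult_add_distrib_mat[of _ n n _ n]
      mult_smult_assoc_mat[of _ n n _ n] mult_smult_distrib[of _ n n _ n] comm_add_mat[of _ n n]
      left_mult_one_mat right_mult_one_mat)

lemma pow_smult:
  fixes x :: "'k::field mat"
  assumes x: "x \<in> carrier_mat n n"
  shows "(c \<cdot>\<^sub>m x) ^\<^sub>m k = c ^ k \<cdot>\<^sub>m (x ^\<^sub>m k)"
proof (induction k)
  case 0 show ?case using x by (intro eq_matI) auto
next
  case (Suc k)
  then show ?case using x
    by (intro eq_matI) (auto simp: mult_smult_assoc_mat[of _ n n _ n] mult_smult_distrib[of _ n n _ n])
qed

lemma pow_comm:
  fixes z :: "'k::field mat"
  assumes z: "z \<in> carrier_mat n n"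
  shows "z * z ^\<^sub>m k = z ^\<^sub>m k * z"
proof (induction k)
  case 0 show ?case using z by (simp add: left_mult_one_mat right_mult_one_mat)
next
  case (Suc k)
  have a: "(z * z ^\<^sub>m k) * z = z * (z ^\<^sub>m k * z)" by (rule assoc_mult_mat[OF z pow_carrier_mat[OF z] z])
  have "z * z ^\<^sub>m Suc k = (z * z ^\<^sub>m k) * z" using a by simp
  also have "\<dots> = z ^\<^sub>m Suc k * z" using Suc by simp
  finally show ?case .
qed


lemma add_cancel_mat:
  fixes A B C :: "'k::field mat"
  assumes "A \<in> carrier_mat n m" "B \<in> carrier_mat n m" "C \<in> carrier_mat n m" "A + C = B + C"
  shows "A = B"
proof (rule eq_matI)
  fix i j assume ij: "i < dim_row B" "j < dim_col B"
  have "(A + C) $$ (i,j) = (B + C) $$ (i,j)" using assms by simp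
  moreover have "(A + C) $$ (i,j) = A $$ (i,j) + C $$ (i,j)" using assms(1,2,3) ij by auto
  moreover have "(B + C) $$ (i,j) = B $$ (i,j) + C $$ (i,j)" using assms(1,2,3) ij by auto
  ultimately show "A $$ (i,j) = B $$ (i,j)" by simp
qed (use assms in auto)

fun Gs :: "nat \<Rightarrow> 'k::field mat \<Rightarrow> nat \<Rightarrow> 'k mat" where
  "Gs n z 0 = 0\<^sub>m n n"
| "Gs n z (Suc k) = 1\<^sub>m n + z * Gs n z k"

lemma Gs_carrier[simp]: "z \<in> carrier_mat n n \<Longrightarrow> Gs n z k \<in> carrier_mat n n"
  by (induction k) auto

lemma Gs_inv:
  fixes z :: "'k::field mat"
  assumes z: "z \<in> carrier_mat n n" and M: "M \<in> carrier_mat n n"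
    and Mz: "M + z = 1\<^sub>m n"
  shows "M * Gs n z k + z ^\<^sub>m k = 1\<^sub>m n \<and> Gs n z k * M + z ^\<^sub>m k = 1\<^sub>m n"
proof (induction k)
  case 0 show ?case using z M by (auto simp: right_mult_one_mat)
next
  case (Suc k)
  have zM: "z * M = M * z"
  proof -
    have "z * (M + z) = (M + z) * z" using Mz z by (simp add: left_mult_one_mat right_mult_one_mat)
    hence "z * M + z * z = M * z + z * z" using z M by (simp add: add_mult_distrib_mat[of _ n n _ _ n] mult_add_distrib_mat[of _ n n _ n])
    thus ?thesis by (rule add_cancel_mat[OF mult_carrier_mat[OF z M] mult_carrier_mat[OF M z] mult_carrier_mat[OF z z]])
  qed
  have zMG: "M * (z * Gs n z k) = z * (M * Gs n z k)"
  proof -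
    have "M * (z * Gs n z k) = (M * z) * Gs n z k" using assoc_mult_mat[OF M z Gs_carrier[OF z]] by simp
    also have "\<dots> = (z * M) * Gs n z k" using zM by simp
    also have "\<dots> = z * (M * Gs n z k)" using assoc_mult_mat[OF z M Gs_carrier[OF z]] by simp
    finally show ?thesis .
  qed
  have e1: "z ^\<^sub>m Suc k = z * z ^\<^sub>m k" using pow_comm[OF z] by simp
  have "M * Gs n z (Suc k) + z ^\<^sub>m Suc k = M + z * (M * Gs n z k + z ^\<^sub>m k)"
    using z M zMG e1
    by (simp add: mult_add_distrib_mat[of _ n n _ n] right_mult_one_mat)
  also have "\<dots> = 1\<^sub>m n" using Suc Mz z by (simp add: right_mult_one_mat)
  finally have 1: "M * Gs n z (Suc k) + z ^\<^sub>m Suc k = 1\<^sub>m n" .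
  have "Gs n z (Suc k) * M + z ^\<^sub>m Suc k = M + z * (Gs n z k * M + z ^\<^sub>m k)"
    using z M e1 assoc_mult_mat[OF z Gs_carrier[OF z] M]
      mult_add_distrib_mat[OF z mult_carrier_mat[OF Gs_carrier[OF z] M] pow_carrier_mat[OF z]]
      assoc_add_mat[OF M mult_carrier_mat[OF z mult_carrier_mat[OF Gs_carrier[OF z] M]] mult_carrier_mat[OF z pow_carrier_mat[OF z]]]
    by (simp add: add_mult_distrib_mat[of _ n n _ _ n] mult_add_distrib_mat[of _ n n _ n] left_mult_one_mat)
  also have "\<dots> = 1\<^sub>m n" using Suc Mz z by (simp add: right_mult_one_mat)
  finally show ?case using 1 by simp
qed

lemma nil_inv:
  fixes x :: "'k::field mat"
  assumes x: "x \<in> nilp n"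
  shows "\<exists>B \<in> carrier_mat n n. (1\<^sub>m n + c \<cdot>\<^sub>m x) * B = 1\<^sub>m n \<and> B * (1\<^sub>m n + c \<cdot>\<^sub>m x) = 1\<^sub>m n"
proof -
  from x obtain m where xc: "x \<in> carrier_mat n n" and xm: "x ^\<^sub>m m = 0\<^sub>m n n"
    unfolding nilp_def by auto
  define z where "z = (- c) \<cdot>\<^sub>m x"
  have z: "z \<in> carrier_mat n n" using xc by (simp add: z_def)
  have zm: "z ^\<^sub>m m = 0\<^sub>m n n" unfolding z_def pow_smult[OF xc] xm by (intro eq_matI) auto
  have Mz: "(1\<^sub>m n + c \<cdot>\<^sub>m x) + z = 1\<^sub>m n" using xc by (intro eq_matI) (auto simp: z_def)
  from Gs_inv[OF z _ Mz, of m] xc zm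
  have "(1\<^sub>m n + c \<cdot>\<^sub>m x) * Gs n z m = 1\<^sub>m n \<and> Gs n z m * (1\<^sub>m n + c \<cdot>\<^sub>m x) = 1\<^sub>m n"
    using z by (metis Gs_carrier right_add_zero_mat add_carrier_mat mult_carrier_mat one_carrier_mat smult_carrier_mat)
  thus ?thesis using z by (intro bexI[of _ "Gs n z m"]) auto
qed


lemma cancel_l:
  fixes P Q X :: "'k::field mat"
  assumes "P \<in> carrier_mat n n" "Q \<in> carrier_mat n n" "X \<in> carrier_mat n m" "P * Q = 1\<^sub>m n"
  shows "P * (Q * X) = X"
proof -
  have "P * (Q * X) = (P * Q) * X" using assoc_mult_mat[OF assms(1-3)] by simp
  thus ?thesis using assms by (simp add: left_mult_one_mat)
qed

lemma comm_l:
  fixes P Q X :: "'k::field mat"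
  assumes "P \<in> carrier_mat n n" "Q \<in> carrier_mat n n" "X \<in> carrier_mat n m" "P * Q = Q * P"
  shows "P * (Q * X) = Q * (P * X)"
proof -
  have "P * (Q * X) = (P * Q) * X" using assoc_mult_mat[OF assms(1-3)] by simp
  also have "\<dots> = (Q * P) * X" using assms by simp
  also have "\<dots> = Q * (P * X)" using assoc_mult_mat[OF assms(2,1,3)] by simp
  finally show ?thesis .
qed

lemma inv_unique2:
  fixes A B C :: "'k::field mat"
  assumes A: "A \<in> carrier_mat n n" and B: "B \<in> carrier_mat n n" and C: "C \<in> carrier_mat n n"
    and "A * B = 1\<^sub>m n" "B * A = 1\<^sub>m n" "A * C = 1\<^sub>m n" "C * A = 1\<^sub>m n"
  shows "B = C"
  using minv_unique[OF A B] minv_unique[OF A C] assms by simp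

theorem mainTheorem3:
  fixes p e n :: nat and \<alpha> :: "'k::field" and x :: "'k mat"
  assumes "prime p" and "e \<ge> 1" and "q = p ^ e"
    and "alg_closed_type TYPE('k)" and "CHAR('k) = p"
    and "\<alpha> ^ (q ^ 2) = \<alpha>" and "\<alpha> ^ q \<noteq> \<alpha>"
    and "x \<in> nilp n" and "F_lie q n x = x"
  shows "s_inv q n \<alpha> x \<in> GF q n"
proof -
  have qpos: "q > 0" using assms(1,3) by (simp add: prime_gt_0_nat)
  have frs: "\<And>(f :: nat \<Rightarrow> 'k) S. sum f S ^ q = sum (\<lambda>i. f i ^ q) S"
    by (rule freshmans_dream_sum') (use assms(1,3,5) in auto)
  have fra: "\<And>u v :: 'k. (u + v) ^ q = u ^ q + v ^ q"
    by (rule freshmans_dream') (use assms(1,3,5) in auto)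
  have xc: "x \<in> carrier_mat n n" using assms(8) unfolding nilp_def by auto
  have Tx: "Tm q n x = x" using assms(9) unfolding F_lie_def Tm_def .
  define b where "b = \<alpha> ^ q"
  have bq: "b ^ q = \<alpha>" unfolding b_def using assms(6) by (simp add: power_mult[symmetric] power2_eq_square)
  define A where "A = 1\<^sub>m n + b \<cdot>\<^sub>m x"
  define Bm where "Bm = 1\<^sub>m n + \<alpha> \<cdot>\<^sub>m x"
  have Ac: "A \<in> carrier_mat n n" and Bc: "Bm \<in> carrier_mat n n" using xc by (auto simp: A_def Bm_def)
  obtain Ai where Aic: "Ai \<in> carrier_mat n n" and AAi: "A * Ai = 1\<^sub>m n" and AiA: "Ai * A = 1\<^sub>m n"
    using nil_inv[OF assms(8), of b] unfolding A_def by blast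
  obtain Bi where Bic: "Bi \<in> carrier_mat n n" and BBi: "Bm * Bi = 1\<^sub>m n" and BiB: "Bi * Bm = 1\<^sub>m n"
    using nil_inv[OF assms(8), of \<alpha>] unfolding Bm_def by blast
  have sg: "s_inv q n \<alpha> x = Ai * Bm"
    unfolding s_inv_def minv_unique[OF Ac[unfolded A_def b_def] Aic[unfolded A_def] AAi[unfolded A_def b_def] AiA[unfolded A_def b_def]]
    using xc by (simp add: Bm_def b_def comm_add_mat[of _ n n])
  define g where "g = Ai * Bm"
  have gc: "g \<in> carrier_mat n n" using Aic Bc by (simp add: g_def)
  have TA: "Tm q n A = Bm" unfolding A_def Bm_def
    using xc by (simp add: Tm_add[OF _ _ fra] Tm_smult Tm_one[OF qpos] Tx bq)
  have TB: "Tm q n Bm = A" unfolding A_def Bm_def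
    using xc by (simp add: Tm_add[OF _ _ fra] Tm_smult Tm_one[OF qpos] Tx b_def)
  have TAi: "Tm q n Ai = Bi"
  proof (rule inv_unique2[OF Bc Tm_carrier Bic])
    show "Bm * Tm q n Ai = 1\<^sub>m n" using Tm_mult[OF Aic Ac frs] AiA TA by (simp add: Tm_one[OF qpos])
    show "Tm q n Ai * Bm = 1\<^sub>m n" using Tm_mult[OF Ac Aic frs] AAi TA by (simp add: Tm_one[OF qpos])
  qed (use BBi BiB in auto)
  have Tg: "Tm q n g = A * Bi" unfolding g_def using Tm_mult[OF Aic Bc frs] TB TAi by simp
  have ABc: "A * Bm = Bm * A"
  proof -
    have "x * Bm = Bm * x" using comm_lin[OF xc xc, of \<alpha>] by (simp add: Bm_def)
    thus ?thesis unfolding A_def using comm_lin[OF Bc xc] by simp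
  qed
  have BiA: "Bi * A = A * Bi"
  proof -
    have "Bi * A = Bi * (A * (Bm * Bi))" using BBi Ac by (simp add: right_mult_one_mat)
    also have "\<dots> = Bi * (Bm * (A * Bi))" using comm_l[OF Ac Bc Bic ABc] by simp
    also have "\<dots> = A * Bi" using cancel_l[OF Bic Bc mult_carrier_mat[OF Ac Bic] BiB] by simp
    finally show ?thesis .
  qed
  have g1: "g * Tm q n g = 1\<^sub>m n"
  proof -
    have "g * Tm q n g = Ai * (Bm * (A * Bi))" unfolding Tg unfolding g_def by (rule assoc_mult_mat[OF Aic Bc mult_carrier_mat[OF Ac Bic]])
    also have "\<dots> = Ai * (A * (Bm * Bi))" using comm_l[OF Ac Bc Bic ABc] by simp
    also have "\<dots> = 1\<^sub>m n" using BBi Ac AiA by (simp add: right_mult_one_mat)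
    finally show ?thesis .
  qed
  have g2: "Tm q n g * g = 1\<^sub>m n"
  proof -
    have "Tm q n g * g = A * (Bi * (Ai * Bm))" unfolding Tg unfolding g_def by (rule assoc_mult_mat[OF Ac Bic mult_carrier_mat[OF Aic Bc]])
    also have "\<dots> = Bi * (A * (Ai * Bm))" using comm_l[OF Ac Bic mult_carrier_mat[OF Aic Bc] BiA[symmetric]] by simp
    also have "\<dots> = 1\<^sub>m n" using cancel_l[OF Ac Aic Bc AAi] BiB by simp
    finally show ?thesis .
  qed
  have "g \<in> GL n"
    unfolding GL_def invertible_mat_def inverts_mat_def using gc g1 g2
    by (auto simp: Tm_def intro!: exI[of _ "Tm q n g"])
  moreover have "F_grp q n g = g"
  proof -
    have "F_grp q n g = minv n (Tm q n g)" unfolding F_grp_def Tm_def ..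
    also have "\<dots> = g" by (rule minv_unique[OF Tm_carrier gc g2 g1])
    finally show ?thesis .
  qed
  ultimately show ?thesis unfolding GF_def sg g_def[symmetric] by simp
qed

end
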